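(* Let $\mathcal{H}$ be a hedgehog with support function $h(s)=a_0+\sum_{n\geqslant1}(a_n\cos(ns)+b_n\sin(ns))$ and let $k>2$ be an integer. Every equiangular $k$-gon circumscribed about $\mathcal{H}$ is a regular $k$-gon with its center of mass at the Steiner point of $\mathcal{H}$ if and only if \[ h(s)=a_0+a_1\cos s+b_1\sin s+\sum_{k\mid n,\ n>1}\big(a_n\cos(ns)+b_n\sin(ns)\big). \]
   Context: Write $u(s)=(\cos s,\sin s)$, $u'(s)=(-\sin s,\cos s)$. A hedgehog is a closed planar curve determined by a smooth $2\pi$-periodic function $h$ (its support function) via $\mathcal{H}(s)=h(s)u(s)+h'(s)u'(s)$; the support line of $\mathcal{H}$ with normal $u(t)$ is $\{x:\langle x,u(t)\rangle=h(t)\}$. The Steiner point of $\mathcal{H}$ is $\frac1\pi\int_0^{2\pi}h(s)u(s)\,ds=(a_1,b_1)$. For $s\in\mathbb{R}$ and $j\in\mathbb{Z}$ let $\ell_j(s)=\{x:\langle x,u(s+\tfrac{2\pi j}{k})\rangle=h(s+\tfrac{2\pi j}{k})\}$. The equiangular $k$-gon circumscribed about $\mathcal{H}$ at parameter $s$ is the polygon with vertices $v_j(s)=\ell_j(s)\cap\ell_{j+1}(s)$, $j=0,\dots,k-1$ (indices mod $k$); i.e. each of its sides lies on a support line of $\mathcal{H}$ and consecutive side normals differ by $2\pi/k$. Its center of mass is $\frac1k\sum_{j}v_j(s)$. *)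

theory Defs
  imports "HOL-Analysis.Analysis"
begin

definition unitv :: "real \<Rightarrow> real \<times> real" where
  "unitv s = (cos s, sin s)"

definition smooth_fun :: "(real \<Rightarrow> real) \<Rightarrow> bool" where
  "smooth_fun h \<longleftrightarrow> (\<forall>n x. ((deriv ^^ n) h) differentiable (at x))"

definition hedgehog_support :: "(real \<Rightarrow> real) \<Rightarrow> bool" where
  "hedgehog_support h \<longleftrightarrow> smooth_fun h \<and> (\<forall>s. h (s + 2 * pi) = h s)"

definition fourier_a0 :: "(real \<Rightarrow> real) \<Rightarrow> real" where
  "fourier_a0 h = integral {0..2*pi} h / (2 * pi)"

definition fourier_a :: "(real \<Rightarrow> real) \<Rightarrow> nat \<Rightarrow> real" where
  "fourier_a h n = integral {0..2*pi} (\<lambda>s. h s * cos (real n * s)) / pi"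

definition fourier_b :: "(real \<Rightarrow> real) \<Rightarrow> nat \<Rightarrow> real" where
  "fourier_b h n = integral {0..2*pi} (\<lambda>s. h s * sin (real n * s)) / pi"

definition steiner_point :: "(real \<Rightarrow> real) \<Rightarrow> real \<times> real" where
  "steiner_point h = (1 / pi) *\<^sub>R integral {0..2*pi} (\<lambda>s. h s *\<^sub>R unitv s)"

definition support_line :: "(real \<Rightarrow> real) \<Rightarrow> real \<Rightarrow> (real \<times> real) set" where
  "support_line h t = {x. x \<bullet> unitv t = h t}"

definition eq_line :: "(real \<Rightarrow> real) \<Rightarrow> nat \<Rightarrow> real \<Rightarrow> int \<Rightarrow> (real \<times> real) set" where
  "eq_line h k s j = support_line h (s + 2 * pi * real_of_int j / real k)"

definition eq_vertex :: "(real \<Rightarrow> real) \<Rightarrow> nat \<Rightarrow> real \<Rightarrow> nat \<Rightarrow> real \<times> real" where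
  "eq_vertex h k s j = (THE x. x \<in> eq_line h k s (int j) \<inter> eq_line h k s (int j + 1))"

definition center_of_mass :: "nat \<Rightarrow> (nat \<Rightarrow> real \<times> real) \<Rightarrow> real \<times> real" where
  "center_of_mass k v = (1 / real k) *\<^sub>R (\<Sum>j<k. v j)"

text \<open>Vertices v_0..v_{k-1} form a regular k-gon (possibly degenerate, radius 0).\<close>
definition regular_polygon :: "nat \<Rightarrow> (nat \<Rightarrow> real \<times> real) \<Rightarrow> bool" where
  "regular_polygon k v \<longleftrightarrow>
     (\<exists>c r \<theta>. \<forall>j<k. v j = c + r *\<^sub>R unitv (\<theta> + 2 * pi * real j / real k))"

end

theory Submission
  imports Defs
begin


lemma abs_mul_cos_div_le:
  fixes x l M y :: real
  assumes "\<bar>x\<bar> \<le> M" "l > 0"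
  shows "\<bar>x * cos y / l\<bar> \<le> M / l" "\<bar>- x * cos y / l\<bar> \<le> M / l"
proof -
  have "\<bar>x * cos y\<bar> \<le> M"
    using assms(1) mult_left_le[OF abs_cos_le_one[of y] abs_ge_zero[of x]] by (simp add: abs_mult)
  then show "\<bar>x * cos y / l\<bar> \<le> M / l" "\<bar>- x * cos y / l\<bar> \<le> M / l"
    using assms(2) by (simp_all add: divide_right_mono)
qed

lemma RL_poly:
  fixes p :: "real \<Rightarrow> real"
  assumes p: "polynomial_function p" and ab: "a \<le> b"
  shows "\<exists>C. \<forall>l>0. \<forall>\<phi>. \<bar>integral {a..b} (\<lambda>s. p s * sin (l * s + \<phi>))\<bar> \<le> C / l"
proof -
  obtain p' where p': "polynomial_function p'" "\<And>x. (p has_vector_derivative (p' x)) (at x)"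
    using has_vector_derivative_polynomial_function[OF p] by blast
  have cp: "continuous_on {a..b} p" and cp': "continuous_on {a..b} p'"
    using continuous_on_polymonial_function p p'(1) by blast+
  obtain M where M: "\<And>s. s \<in> {a..b} \<Longrightarrow> \<bar>p s\<bar> \<le> M"
    using compact_imp_bounded[OF compact_continuous_image[OF cp compact_Icc]]
    unfolding bounded_iff by force
  obtain M' where M': "\<And>s. s \<in> {a..b} \<Longrightarrow> \<bar>p' s\<bar> \<le> M'"
    using compact_imp_bounded[OF compact_continuous_image[OF cp' compact_Icc]]
    unfolding bounded_iff by force
  have M0: "0 \<le> M" using M[of a] ab by auto
  have M0': "0 \<le> M'" using M'[of a] ab by auto
  show ?thesis
  proof (intro exI allI impI)
    fix l :: real and \<phi> assume l: "l > 0"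
    define F where "F s = - p s * cos (l * s + \<phi>) / l" for s
    have dp: "(p has_real_derivative p' s) (at s)" for s
      using p'(2)[of s] by (simp add: has_real_derivative_iff_has_vector_derivative)
    have "(F has_real_derivative (p s * sin (l * s + \<phi>) - p' s * cos (l * s + \<phi>) / l)) (at s)" for s
      unfolding F_def using l
      by (auto intro!: derivative_eq_intros dp simp: field_simps)
    hence "((\<lambda>s. p s * sin (l * s + \<phi>) - p' s * cos (l * s + \<phi>) / l) has_integral (F b - F a)) {a..b}"
      using ab by (intro fundamental_theorem_of_calculus)
        (auto simp: has_real_derivative_iff_has_vector_derivative[symmetric] intro: has_field_derivative_at_within)
    hence I1: "integral {a..b} (\<lambda>s. p s * sin (l * s + \<phi>) - p' s * cos (l * s + \<phi>) / l) = F b - F a"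
      by (rule integral_unique)
    have i1: "(\<lambda>s. p s * sin (l * s + \<phi>)) integrable_on {a..b}"
      by (intro integrable_continuous_interval continuous_intros cp)
    have i2: "(\<lambda>s. p' s * cos (l * s + \<phi>) / l) integrable_on {a..b}"
      using l by (auto intro!: integrable_continuous_interval continuous_intros cp')
    have eq: "integral {a..b} (\<lambda>s. p s * sin (l * s + \<phi>)) = F b - F a + integral {a..b} (\<lambda>s. p' s * cos (l * s + \<phi>) / l)"
      using I1 integral_diff[OF i1 i2] by simp
    have "\<bar>F b\<bar> \<le> M / l"
      unfolding F_def using l M[of b] ab by (intro abs_mul_cos_div_le) auto
    moreover have "\<bar>F a\<bar> \<le> M / l"
      unfolding F_def using l M[of a] ab by (intro abs_mul_cos_div_le) auto
    moreover have "norm (integral {a..b} (\<lambda>s. p' s * cos (l * s + \<phi>) / l)) \<le> (M' / l) * (b - a)" (is "norm ?I \<le> _")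
    proof (rule integral_bound[OF ab])
      show "continuous_on {a..b} (\<lambda>s. p' s * cos (l * s + \<phi>) / l)"
        using l by (auto intro!: continuous_intros cp')
      fix t assume t: "t \<in> {a..b}"
      show "norm (p' t * cos (l * t + \<phi>) / l) \<le> M' / l"
        unfolding real_norm_def by (rule abs_mul_cos_div_le(1)[OF M'[OF t] l])
    qed
    moreover have "(2 * M + M' * (b - a)) / l = M / l + M / l + (M' / l) * (b - a)"
      using l by (simp add: field_simps)
    ultimately show "\<bar>integral {a..b} (\<lambda>s. p s * sin (l * s + \<phi>))\<bar> \<le> (2 * M + M' * (b - a)) / l"
      unfolding eq real_norm_def by arith
  qed
qed


lemma RL_cont:
  fixes q :: "real \<Rightarrow> real"
  assumes q: "continuous_on {a..b} q" and ab: "a \<le> b" and e: "e > 0"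
  shows "\<exists>L>0. \<forall>l\<ge>L. \<forall>\<phi>. \<bar>integral {a..b} (\<lambda>s. q s * sin (l * s + \<phi>))\<bar> \<le> e"
proof -
  define e' where "e' = e / (2 * (b - a + 1))"
  have e': "e' > 0" using e ab by (simp add: e'_def)
  obtain p where p: "polynomial_function p" and pq: "\<And>s. s \<in> {a..b} \<Longrightarrow> norm (q s - p s) < e'"
    using Stone_Weierstrass_polynomial_function[OF compact_Icc q e'] by blast
  have cp: "continuous_on {a..b} p" using continuous_on_polymonial_function p by blast
  obtain C where C: "\<And>l \<phi>. l > 0 \<Longrightarrow> \<bar>integral {a..b} (\<lambda>s. p s * sin (l * s + \<phi>))\<bar> \<le> C / l"
    using RL_poly[OF p ab] by blast
  define L where "L = 2 * \<bar>C\<bar> / e + 1"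
  have "2 * \<bar>C\<bar> / e \<ge> 0" using e by simp
  then have L: "L > 0" by (simp add: L_def)
  show ?thesis
  proof (intro exI[of _ L] conjI allI impI L)
    fix l \<phi> assume l: "L \<le> l"
    have l0: "l > 0" using L l by linarith
    have "C / l \<le> \<bar>C\<bar> / l" using l0 by (simp add: divide_right_mono)
    also have "\<bar>C\<bar> / l \<le> e / 2"
    proof -
      have "\<bar>C\<bar> * 2 \<le> e * l"
      proof -
        have "2 * \<bar>C\<bar> / e \<le> l" using l unfolding L_def by linarith
        then show ?thesis using e by (simp add: field_simps)
      qed
      then show ?thesis using l0 by (simp add: field_simps)
    qed
    finally have P: "\<bar>integral {a..b} (\<lambda>s. p s * sin (l * s + \<phi>))\<bar> \<le> e / 2"
      using C[OF l0, of \<phi>] by linarith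
    have "norm (integral {a..b} (\<lambda>s. (q s - p s) * sin (l * s + \<phi>))) \<le> e' * (b - a)"
    proof (rule integral_bound[OF ab])
      show "continuous_on {a..b} (\<lambda>s. (q s - p s) * sin (l * s + \<phi>))"
        by (intro continuous_intros q cp)
      fix t assume t: "t \<in> {a..b}"
      have "\<bar>(q t - p t) * sin (l * t + \<phi>)\<bar> \<le> \<bar>q t - p t\<bar>"
        using mult_left_le[OF abs_sin_le_one abs_ge_zero] by (simp add: abs_mult)
      also have "\<dots> \<le> e'" using pq[OF t] by simp
      finally show "norm ((q t - p t) * sin (l * t + \<phi>)) \<le> e'" by simp
    qed
    also have "e' * (b - a) \<le> e / 2"
      using e ab by (simp add: e'_def field_simps)
    finally have Q: "\<bar>integral {a..b} (\<lambda>s. (q s - p s) * sin (l * s + \<phi>))\<bar> \<le> e / 2" by simp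
    have i1: "(\<lambda>s. (q s - p s) * sin (l * s + \<phi>)) integrable_on {a..b}"
      by (intro integrable_continuous_interval continuous_intros q cp)
    have i2: "(\<lambda>s. p s * sin (l * s + \<phi>)) integrable_on {a..b}"
      by (intro integrable_continuous_interval continuous_intros cp)
    have "integral {a..b} (\<lambda>s. q s * sin (l * s + \<phi>)) = 
          integral {a..b} (\<lambda>s. (q s - p s) * sin (l * s + \<phi>)) + integral {a..b} (\<lambda>s. p s * sin (l * s + \<phi>))"
      by (subst integral_add[OF i1 i2, symmetric]) (simp add: algebra_simps)
    then show "\<bar>integral {a..b} (\<lambda>s. q s * sin (l * s + \<phi>))\<bar> \<le> e" using P Q by linarith
  qed
qed



lemma periodic_nat:
  assumes "\<And>s. G (s + 2 * pi) = G s"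
  shows "G (s + 2 * pi * real n) = G s"
proof (induction n arbitrary: s)
  case 0 then show ?case by simp
next
  case (Suc n)
  have "G (s + 2 * pi * real (Suc n)) = G ((s + 2 * pi * real n) + 2 * pi)"
    by (simp add: algebra_simps)
  also have "\<dots> = G s" using assms Suc by simp
  finally show ?case .
qed

lemma periodic_int:
  assumes "\<And>s. G (s + 2 * pi) = G s"
  shows "G (s + 2 * pi * real_of_int m) = G s"
proof (cases "m \<ge> 0")
  case True
  then obtain n where "m = int n" using nonneg_int_cases by blast
  then show ?thesis using periodic_nat[of G, OF assms] by simp
next
  case False
  then obtain n where n: "m = - int n" by (metis le_cases neg_0_le_iff_le nonpos_int_cases)
  have "G s = G ((s + 2 * pi * real_of_int m) + 2 * pi * real n)"
    by (simp add: n)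
  also have "\<dots> = G (s + 2 * pi * real_of_int m)" using periodic_nat[of G, OF assms] by blast
  finally show ?thesis by simp
qed

lemma periodic_integral:
  fixes G :: "real \<Rightarrow> real"
  assumes cont: "continuous_on UNIV G" and per: "\<And>s. G (s + 2 * pi) = G s"
  shows "integral {c..c + 2 * pi} G = integral {0..2 * pi} G"
proof -
  define m where "m = \<lfloor>c / (2 * pi)\<rfloor>"
  define c' where "c' = c - 2 * pi * real_of_int m"
  have "real_of_int m \<le> c / (2 * pi)" "c / (2 * pi) < real_of_int m + 1"
    unfolding m_def by linarith+
  hence "2 * pi * real_of_int m \<le> c" "c < 2 * pi * real_of_int m + 2 * pi"
    using pi_gt_zero by (simp_all add: field_simps)
  hence c': "0 \<le> c'" "c' \<le> 2 * pi" unfolding c'_def by linarith+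
  have int: "G integrable_on {x..y}" for x y
    by (rule integrable_continuous_interval) (rule continuous_on_subset[OF cont], simp)
  have "integral {c..c + 2 * pi} G = integral {c'..c' + 2 * pi} (\<lambda>x. G (x + 2 * pi * real_of_int m))"
    using integral_shift_real_ivl[where a=c and c="2 * pi * real_of_int m" and b="c + 2 * pi" and f=G]
    by (simp add: c'_def algebra_simps)
  also have "\<dots> = integral {c'..c' + 2 * pi} G"
    using periodic_int[of G, OF per] by simp
  also have "\<dots> = integral {c'..2 * pi} G + integral {2 * pi..c' + 2 * pi} G"
    using Henstock_Kurzweil_Integration.integral_combine[where a=c' and c="2 * pi" and b="c' + 2 * pi" and f=G] c' int by simp
  also have "integral {2 * pi..c' + 2 * pi} G = integral {0..c'} G"
    using integral_shift_real_ivl[where a="2 * pi" and c="2 * pi" and b="c' + 2 * pi" and f=G] per by simp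
  also have "integral {c'..2 * pi} G + integral {0..c'} G = integral {0..2 * pi} G"
    using Henstock_Kurzweil_Integration.integral_combine[where a=0 and c=c' and b="2 * pi" and f=G] c' int by simp
  finally show ?thesis .
qed

lemma two_sin_cos: "2 * sin (a::real) * cos b = sin (b + a) - sin (b - a)"
  by (simp add: sin_add sin_diff)

lemma dirichlet:
  "2 * sin (t / 2) * (1 / 2 + (\<Sum>n\<in>{1..N}. cos (real n * t))) = sin ((real N + 1 / 2) * t)"
proof (induction N)
  case 0 then show ?case by simp
next
  case (Suc N)
  have "2 * sin (t / 2) * (1 / 2 + (\<Sum>n\<in>{1..Suc N}. cos (real n * t)))
        = 2 * sin (t / 2) * (1 / 2 + (\<Sum>n\<in>{1..N}. cos (real n * t))) + 2 * sin (t / 2) * cos (real (Suc N) * t)"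
    by (simp add: algebra_simps)
  also have "\<dots> = sin ((real N + 1 / 2) * t) + (sin (real (Suc N) * t + t / 2) - sin (real (Suc N) * t - t / 2))"
    using Suc two_sin_cos by simp
  also have "real (Suc N) * t - t / 2 = (real N + 1 / 2) * t" by (simp add: algebra_simps)
  also have "real (Suc N) * t + t / 2 = (real (Suc N) + 1 / 2) * t" by (simp add: algebra_simps)
  finally show ?case by simp
qed

lemma int_cos_n:
  assumes "n \<ge> 1"
  shows "integral {0..2 * pi} (\<lambda>s. cos (real n * s)) = 0"
proof -
  have "((\<lambda>s. cos (real n * s)) has_integral (sin (real n * (2 * pi)) / real n - sin (real n * 0) / real n)) {0..2 * pi}"
    using assms
    by (intro fundamental_theorem_of_calculus)
       (auto intro!: derivative_eq_intros simp: has_real_derivative_iff_has_vector_derivative[symmetric])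
  moreover have "sin (real n * (2 * pi)) = 0" using sin_2npi[of n] by (simp add: mult.commute mult.left_commute)
  ultimately show ?thesis by (simp add: integral_unique)
qed

lemma int_sin_n:
  assumes "n \<ge> 1"
  shows "integral {0..2 * pi} (\<lambda>s. sin (real n * s)) = 0"
proof -
  have "((\<lambda>s. sin (real n * s)) has_integral (- cos (real n * (2 * pi)) / real n - - cos (real n * 0) / real n)) {0..2 * pi}"
    using assms
    by (intro fundamental_theorem_of_calculus)
       (auto intro!: derivative_eq_intros simp: has_real_derivative_iff_has_vector_derivative[symmetric])
  moreover have "cos (real n * (2 * pi)) = 1" using cos_2npi[of n] by (simp add: mult.commute mult.left_commute)
  ultimately show ?thesis by (simp add: integral_unique)
qed



definition dk :: "nat \<Rightarrow> real \<Rightarrow> real" where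
  "dk N t = 1 / 2 + (\<Sum>n\<in>{1..N}. cos (real n * t))"

lemma cos_shift_2pi: "cos (real n * (t + 2 * pi)) = cos (real n * t)"
proof -
  have "real n * (t + 2 * pi) = real n * t + 2 * real n * pi" by (simp add: algebra_simps)
  then show ?thesis by (simp add: cos_add)
qed

lemma sin_shift_2pi: "sin (real n * (t + 2 * pi)) = sin (real n * t)"
proof -
  have "real n * (t + 2 * pi) = real n * t + 2 * real n * pi" by (simp add: algebra_simps)
  then show ?thesis by (simp add: sin_add)
qed

lemma dk_periodic: "dk N (t + 2 * pi) = dk N t"
  unfolding dk_def using cos_shift_2pi by simp

lemma cont_f_interval: "continuous_on UNIV f \<Longrightarrow> continuous_on S f"
  using continuous_on_subset by blast

lemma psum_integral:
  fixes f :: "real \<Rightarrow> real"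
  assumes cont: "continuous_on UNIV f"
  shows "fourier_a0 f + (\<Sum>n\<in>{1..N}. fourier_a f n * cos (real n * x) + fourier_b f n * sin (real n * x))
         = integral {0..2 * pi} (\<lambda>s. f s * dk N (s - x)) / pi"
proof -
  have cf: "continuous_on S f" for S using cont_f_interval[OF cont] .
  have eq: "(\<lambda>s. f s * dk N (s - x)) = (\<lambda>s. f s / 2 + (\<Sum>n\<in>{1..N}. cos (real n * x) * (f s * cos (real n * s)) + sin (real n * x) * (f s * sin (real n * s))))"
    by (rule ext) (simp add: dk_def sum_distrib_left right_diff_distrib cos_diff algebra_simps)
  have i0: "(\<lambda>s. f s / 2) integrable_on {0..2 * pi}"
    by (auto intro!: integrable_continuous_interval continuous_intros cf)
  have i1: "(\<lambda>s. \<Sum>n\<in>{1..N}. cos (real n * x) * (f s * cos (real n * s)) + sin (real n * x) * (f s * sin (real n * s))) integrable_on {0..2 * pi}"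
    by (intro integrable_continuous_interval continuous_intros cf)
  have i2: "(\<lambda>s. cos (real n * x) * (f s * cos (real n * s)) + sin (real n * x) * (f s * sin (real n * s))) integrable_on {0..2 * pi}" for n
    by (intro integrable_continuous_interval continuous_intros cf)
  have i3: "(\<lambda>s. f s * cos (real n * s)) integrable_on {0..2 * pi}" "(\<lambda>s. f s * sin (real n * s)) integrable_on {0..2 * pi}" for n
    by (intro integrable_continuous_interval continuous_intros cf)+
  have i4: "(\<lambda>s. cos (real n * x) * (f s * cos (real n * s))) integrable_on {0..2 * pi}" for n
    by (intro integrable_continuous_interval continuous_intros cf)
  have i5: "(\<lambda>s. sin (real n * x) * (f s * sin (real n * s))) integrable_on {0..2 * pi}" for n
    by (intro integrable_continuous_interval continuous_intros cf)
  have "integral {0..2 * pi} (\<lambda>s. f s * dk N (s - x)) =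
        integral {0..2 * pi} f / 2 + (\<Sum>n\<in>{1..N}. cos (real n * x) * integral {0..2 * pi} (\<lambda>s. f s * cos (real n * s)) + sin (real n * x) * integral {0..2 * pi} (\<lambda>s. f s * sin (real n * s)))"
    unfolding eq integral_add[OF i0 i1] integral_sum[OF finite_atLeastAtMost i2]
    by (intro arg_cong2[where f="(+)"] refl sum.cong) (simp_all add: integral_add[OF i4 i5])
  then have "integral {0..2 * pi} (\<lambda>s. f s * dk N (s - x)) / pi =
        integral {0..2 * pi} f / 2 / pi + (\<Sum>n\<in>{1..N}. (cos (real n * x) * integral {0..2 * pi} (\<lambda>s. f s * cos (real n * s)) + sin (real n * x) * integral {0..2 * pi} (\<lambda>s. f s * sin (real n * s))) / pi)"
    by (simp only: add_divide_distrib sum_divide_distrib)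
  also have "\<dots> = fourier_a0 f + (\<Sum>n\<in>{1..N}. fourier_a f n * cos (real n * x) + fourier_b f n * sin (real n * x))"
    unfolding fourier_a0_def fourier_a_def fourier_b_def
    by (intro arg_cong2[where f="(+)"] sum.cong refl) (simp_all add: add_divide_distrib mult.commute)
  finally show ?thesis by simp
qed



lemma dk_integral: "integral {0..2 * pi} (\<lambda>s. dk N (s - x)) = pi"
proof -
  have eq: "(\<lambda>s. dk N (s - x)) = (\<lambda>s. 1 / 2 + (\<Sum>n\<in>{1..N}. cos (real n * x) * cos (real n * s) + sin (real n * x) * sin (real n * s)))"
    by (rule ext) (simp add: dk_def right_diff_distrib cos_diff algebra_simps)
  have i1: "(\<lambda>s. \<Sum>n\<in>{1..N}. cos (real n * x) * cos (real n * s) + sin (real n * x) * sin (real n * s)) integrable_on {0..2 * pi}"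
    by (intro integrable_continuous_interval continuous_intros)
  have i2: "(\<lambda>s. cos (real n * x) * cos (real n * s) + sin (real n * x) * sin (real n * s)) integrable_on {0..2 * pi}" for n
    by (intro integrable_continuous_interval continuous_intros)
  have i4: "(\<lambda>s. cos (real n * x) * cos (real n * s)) integrable_on {0..2 * pi}" for n
    by (intro integrable_continuous_interval continuous_intros)
  have i5: "(\<lambda>s. sin (real n * x) * sin (real n * s)) integrable_on {0..2 * pi}" for n
    by (intro integrable_continuous_interval continuous_intros)
  have "integral {0..2 * pi} (\<lambda>s. dk N (s - x)) = pi + (\<Sum>n\<in>{1..N}. integral {0..2 * pi} (\<lambda>s. cos (real n * x) * cos (real n * s) + sin (real n * x) * sin (real n * s)))"
    unfolding eq integral_add[OF integrable_const_ivl i1] integral_sum[OF finite_atLeastAtMost i2]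
    by simp
  also have "(\<Sum>n\<in>{1..N}. integral {0..2 * pi} (\<lambda>s. cos (real n * x) * cos (real n * s) + sin (real n * x) * sin (real n * s))) = 0"
    by (intro sum.neutral ballI) (simp add: integral_add[OF i4 i5] int_cos_n int_sin_n)
  finally show ?thesis by simp
qed

lemma sin_half_nonzero:
  assumes "s \<in> {x - pi..x + pi}" "s \<noteq> x"
  shows "sin ((s - x) / 2) \<noteq> 0"
proof
  assume "sin ((s - x) / 2) = 0"
  moreover have "- pi < (s - x) / 2" "(s - x) / 2 < pi" using assms pi_gt_zero by auto
  ultimately have "(s - x) / 2 = 0" using sin_eq_0_pi by blast
  then show False using assms by simp
qed

lemma q_cont:
  fixes f :: "real \<Rightarrow> real"
  assumes cont: "continuous_on UNIV f" and der: "(f has_real_derivative D) (at x)"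
  defines "q \<equiv> \<lambda>s. if s = x then D else (f s - f x) / (2 * sin ((s - x) / 2))"
  shows "continuous_on {x - pi..x + pi} q"
proof (rule continuous_at_imp_continuous_on, rule ballI)
  fix s assume s: "s \<in> {x - pi..x + pi}"
  show "isCont q s"
  proof (cases "s = x")
    case False
    have ev: "eventually (\<lambda>y. y \<in> - {x}) (nhds s)"
      by (rule eventually_nhds_in_open) (use False in auto)
    have E: "eventually (\<lambda>y. (\<lambda>s. (f s - f x) / (2 * sin ((s - x) / 2))) y = q y) (nhds s)"
      by (rule eventually_mono[OF ev]) (auto simp: q_def)
    have M: "isCont (\<lambda>s. (f s - f x) / (2 * sin ((s - x) / 2))) s"
      using sin_half_nonzero[OF s False] cont
      by (auto intro!: continuous_intros simp: continuous_on_eq_continuous_at)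
    show ?thesis by (rule iffD1[OF isCont_cong[OF E] M])
  next
    case True
    define \<phi> where "\<phi> s = 2 * sin ((s - x) / 2)" for s
    have d\<phi>: "(\<phi> has_real_derivative 1) (at x)"
      unfolding \<phi>_def by (auto intro!: derivative_eq_intros)
    have L1: "((\<lambda>y. (f y - f x) / (y - x)) \<longlongrightarrow> D) (at x)"
      using der by (simp add: has_field_derivative_iff)
    have L2: "((\<lambda>y. (\<phi> y - \<phi> x) / (y - x)) \<longlongrightarrow> 1) (at x)"
      using d\<phi> by (simp add: has_field_derivative_iff)
    have L3: "((\<lambda>y. ((f y - f x) / (y - x)) / ((\<phi> y - \<phi> x) / (y - x))) \<longlongrightarrow> D / 1) (at x)"
      by (rule tendsto_divide[OF L1 L2]) simp
    have ev: "eventually (\<lambda>y. y \<noteq> x) (at x)"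
      by (simp add: eventually_at_filter)
    have "eventually (\<lambda>y. ((f y - f x) / (y - x)) / ((\<phi> y - \<phi> x) / (y - x)) = q y) (at x)"
      by (rule eventually_mono[OF ev]) (simp add: q_def \<phi>_def)
    from Lim_transform_eventually[OF L3 this] have "(q \<longlongrightarrow> q x) (at x)"
      by (simp add: q_def)
    then show ?thesis using True by (simp add: isCont_def)
  qed
qed



lemma fourier_conv:
  fixes f :: "real \<Rightarrow> real"
  assumes cont: "continuous_on UNIV f" and per: "\<And>s. f (s + 2 * pi) = f s"
    and der: "(f has_real_derivative D) (at x)"
  shows "(\<lambda>N. \<Sum>n\<in>{1..N}. fourier_a f n * cos (real n * x) + fourier_b f n * sin (real n * x))
           \<longlonglongrightarrow> f x - fourier_a0 f"
proof -
  define q where "q \<equiv> \<lambda>s. if s = x then D else (f s - f x) / (2 * sin ((s - x) / 2))"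
  have qc: "continuous_on {x - pi..x + pi} q"
    unfolding q_def by (rule q_cont[OF cont der])
  have cf: "continuous_on S f" for S using cont_f_interval[OF cont] .
  have cdk: "continuous_on S (\<lambda>s. dk N (s - x))" for S N
    unfolding dk_def by (intro continuous_intros)
  have key: "fourier_a0 f + (\<Sum>n\<in>{1..N}. fourier_a f n * cos (real n * x) + fourier_b f n * sin (real n * x)) - f x
     = integral {x - pi..x + pi} (\<lambda>s. q s * sin ((real N + 1 / 2) * s + (- (real N + 1 / 2) * x))) / pi" for N
  proof -
    have i1: "(\<lambda>s. f s * dk N (s - x)) integrable_on {0..2 * pi}"
      by (intro integrable_continuous_interval continuous_intros cf cdk)
    have i2: "(\<lambda>s. f x * dk N (s - x)) integrable_on {0..2 * pi}"
      by (intro integrable_continuous_interval continuous_intros cf cdk)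
    have "fourier_a0 f + (\<Sum>n\<in>{1..N}. fourier_a f n * cos (real n * x) + fourier_b f n * sin (real n * x)) - f x
        = integral {0..2 * pi} (\<lambda>s. f s * dk N (s - x)) / pi - integral {0..2 * pi} (\<lambda>s. f x * dk N (s - x)) / pi"
      using psum_integral[OF cont, where N=N and x=x] dk_integral[where N=N and x=x] by simp
    also have "\<dots> = integral {0..2 * pi} (\<lambda>s. (f s - f x) * dk N (s - x)) / pi"
      using integral_diff[OF i1 i2] by (simp add: diff_divide_distrib left_diff_distrib)
    also have "integral {0..2 * pi} (\<lambda>s. (f s - f x) * dk N (s - x)) = integral {x - pi..x - pi + 2 * pi} (\<lambda>s. (f s - f x) * dk N (s - x))"
    proof (rule periodic_integral[symmetric])
      show "continuous_on UNIV (\<lambda>s. (f s - f x) * dk N (s - x))"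
        by (intro continuous_intros cf cdk)
      fix s
      have "dk N (s + 2 * pi - x) = dk N (s - x)"
        using dk_periodic[of N "s - x"] by (simp add: algebra_simps)
      then show "(f (s + 2 * pi) - f x) * dk N (s + 2 * pi - x) = (f s - f x) * dk N (s - x)"
        using per by simp
    qed
    also have "x - pi + 2 * pi = x + pi" by simp
    also have "integral {x - pi..x + pi} (\<lambda>s. (f s - f x) * dk N (s - x))
        = integral {x - pi..x + pi} (\<lambda>s. q s * sin ((real N + 1 / 2) * s + (- (real N + 1 / 2) * x)))"
    proof (rule integral_cong)
      fix s assume s: "s \<in> {x - pi..x + pi}"
      show "(f s - f x) * dk N (s - x) = q s * sin ((real N + 1 / 2) * s + (- (real N + 1 / 2) * x))"
      proof (cases "s = x")
        case True then show ?thesis by (simp add: q_def algebra_simps)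
      next
        case False
        have nz: "sin ((s - x) / 2) \<noteq> 0" by (rule sin_half_nonzero[OF s False])
        have "sin ((real N + 1 / 2) * s + (- (real N + 1 / 2) * x)) = sin ((real N + 1 / 2) * (s - x))"
          by (rule arg_cong[where f=sin]) (simp add: field_simps)
        also have "\<dots> = 2 * sin ((s - x) / 2) * dk N (s - x)"
          unfolding dk_def by (rule dirichlet[symmetric])
        finally show ?thesis using False nz by (simp add: q_def)
      qed
    qed
    finally show ?thesis .
  qed
  show ?thesis
  proof (rule LIMSEQ_I)
    fix r :: real assume r: "r > 0"
    obtain L where L: "L > 0" "\<And>l \<phi>. l \<ge> L \<Longrightarrow> \<bar>integral {x - pi..x + pi} (\<lambda>s. q s * sin (l * s + \<phi>))\<bar> \<le> r * pi / 2"
      using RL_cont[OF qc _, of "r * pi / 2"] r pi_gt_zero by auto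
    show "\<exists>no. \<forall>N\<ge>no. norm ((\<Sum>n\<in>{1..N}. fourier_a f n * cos (real n * x) + fourier_b f n * sin (real n * x)) - (f x - fourier_a0 f)) < r"
    proof (intro exI allI impI)
      fix N assume N: "nat \<lceil>L\<rceil> \<le> N"
      have "L \<le> real N + 1 / 2" using N by linarith
      then have b: "\<bar>integral {x - pi..x + pi} (\<lambda>s. q s * sin ((real N + 1 / 2) * s + (- (real N + 1 / 2) * x)))\<bar> \<le> r * pi / 2"
        by (rule L(2))
      have "norm ((\<Sum>n\<in>{1..N}. fourier_a f n * cos (real n * x) + fourier_b f n * sin (real n * x)) - (f x - fourier_a0 f))
          = \<bar>integral {x - pi..x + pi} (\<lambda>s. q s * sin ((real N + 1 / 2) * s + (- (real N + 1 / 2) * x)))\<bar> / pi"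
        using key[of N] by (simp add: algebra_simps)
      also have "\<dots> \<le> (r * pi / 2) / pi" by (rule divide_right_mono[OF b]) simp
      also have "\<dots> < r" using r pi_gt_zero by simp
      finally show "norm ((\<Sum>n\<in>{1..N}. fourier_a f n * cos (real n * x) + fourier_b f n * sin (real n * x)) - (f x - fourier_a0 f)) < r" .
    qed
  qed
qed



lemma inner_unitv: "(a, b) \<bullet> unitv t = a * cos t + b * sin t"
  by (simp add: unitv_def)

lemma unitv_inner_unitv: "unitv a \<bullet> unitv b = cos (a - b)"
  by (simp add: unitv_def cos_diff)

lemma line_unique:
  assumes S: "sin (t2 - t1) \<noteq> 0" and e1: "y \<bullet> unitv t1 = z \<bullet> unitv t1" and e2: "y \<bullet> unitv t2 = z \<bullet> unitv t2"
  shows "y = z"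
proof -
  obtain y1 y2 where y: "y = (y1, y2)" by (cases y)
  obtain z1 z2 where z: "z = (z1, z2)" by (cases z)
  define d1 where "d1 = y1 - z1"
  define d2 where "d2 = y2 - z2"
  have E1: "d1 * cos t1 + d2 * sin t1 = 0" using e1 by (simp add: y z inner_unitv d1_def d2_def algebra_simps)
  have E2: "d1 * cos t2 + d2 * sin t2 = 0" using e2 by (simp add: y z inner_unitv d1_def d2_def algebra_simps)
  have "d1 * sin (t2 - t1) = sin t2 * (d1 * cos t1 + d2 * sin t1) - sin t1 * (d1 * cos t2 + d2 * sin t2)"
    by (simp add: sin_diff algebra_simps)
  then have "d1 * sin (t2 - t1) = 0" using E1 E2 by simp
  then have "d1 = 0" using S by simp
  have "d2 * sin (t2 - t1) = cos t1 * (d1 * cos t2 + d2 * sin t2) - cos t2 * (d1 * cos t1 + d2 * sin t1)"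
    by (simp add: sin_diff algebra_simps)
  then have "d2 * sin (t2 - t1) = 0" using E1 E2 by simp
  then have "d2 = 0" using S by simp
  show ?thesis using \<open>d1 = 0\<close> \<open>d2 = 0\<close> by (simp add: y z d1_def d2_def)
qed

lemma line_exists:
  assumes S: "sin (t2 - t1) \<noteq> 0"
  shows "\<exists>y. y \<bullet> unitv t1 = c1 \<and> y \<bullet> unitv t2 = c2"
proof -
  define D where "D = sin (t2 - t1)"
  have D: "D = sin t2 * cos t1 - cos t2 * sin t1" by (simp add: D_def sin_diff)
  define y where "y = ((c1 * sin t2 - c2 * sin t1) / D, (c2 * cos t1 - c1 * cos t2) / D)"
  have "y \<bullet> unitv t1 = c1"
  proof -
    have "y \<bullet> unitv t1 = ((c1 * sin t2 - c2 * sin t1) * cos t1 + (c2 * cos t1 - c1 * cos t2) * sin t1) / D"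
      by (simp add: y_def inner_unitv add_divide_distrib)
    also have "(c1 * sin t2 - c2 * sin t1) * cos t1 + (c2 * cos t1 - c1 * cos t2) * sin t1 = c1 * D"
      by (simp add: D algebra_simps)
    finally show ?thesis using S by (simp add: D_def)
  qed
  moreover have "y \<bullet> unitv t2 = c2"
  proof -
    have "y \<bullet> unitv t2 = ((c1 * sin t2 - c2 * sin t1) * cos t2 + (c2 * cos t1 - c1 * cos t2) * sin t2) / D"
      by (simp add: y_def inner_unitv add_divide_distrib)
    also have "(c1 * sin t2 - c2 * sin t1) * cos t2 + (c2 * cos t1 - c1 * cos t2) * sin t2 = c2 * D"
      by (simp add: D algebra_simps)
    finally show ?thesis using S by (simp add: D_def)
  qed
  ultimately show ?thesis by blast
qed

lemma sin_2pi_k_nonzero: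
  assumes "k > (2::nat)"
  shows "sin (2 * pi / real k) \<noteq> 0"
proof -
  have "0 < 2 * pi / real k" using assms by simp
  moreover have "2 * pi / real k < pi" using assms pi_gt_zero by (simp add: field_simps)
  ultimately show ?thesis using sin_gt_zero by force
qed

lemma eq_vertex_char:
  assumes k: "k > (2::nat)"
  shows "eq_vertex h k s j = y \<longleftrightarrow>
    (y \<bullet> unitv (s + 2 * pi * real j / real k) = h (s + 2 * pi * real j / real k) \<and>
     y \<bullet> unitv (s + 2 * pi * (real j + 1) / real k) = h (s + 2 * pi * (real j + 1) / real k))"
    (is "_ \<longleftrightarrow> ?P y")
proof -
  have diff: "(s + 2 * pi * (real j + 1) / real k) - (s + 2 * pi * real j / real k) = 2 * pi / real k"
    using k by (simp add: field_simps)
  have S: "sin ((s + 2 * pi * (real j + 1) / real k) - (s + 2 * pi * real j / real k)) \<noteq> 0"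
    unfolding diff using sin_2pi_k_nonzero[OF k] .
  have set: "x \<in> eq_line h k s (int j) \<inter> eq_line h k s (int j + 1) \<longleftrightarrow> ?P x" for x
    by (simp add: eq_line_def support_line_def)
  have ex1: "\<exists>!x. ?P x"
  proof -
    obtain y0 where "?P y0" using line_exists[OF S] by blast
    moreover have "x = y0" if "?P x" for x
      using line_unique[OF S] that \<open>?P y0\<close> by metis
    ultimately show ?thesis by blast
  qed
  have V: "eq_vertex h k s j = (THE x. ?P x)" unfolding eq_vertex_def set by simp
  show ?thesis
  proof
    assume "eq_vertex h k s j = y" then show "?P y" using theI'[OF ex1] V by simp
  next
    assume "?P y" then show "eq_vertex h k s j = y" using V the1_equality[OF ex1] by simp
  qed
qed

lemma sum_unitv_zero:
  assumes k: "k \<ge> (2::nat)"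
  shows "(\<Sum>j<k. unitv (\<theta> + 2 * pi * real j / real k)) = 0"
proof -
  define a where "a = pi / real k"
  have a0: "sin a \<noteq> 0"
  proof -
    have "0 < a" "a < pi" using k pi_gt_zero by (auto simp: a_def field_simps)
    then show ?thesis using sin_gt_zero by force
  qed
  define F where "F j = sin (\<theta> + 2 * pi * real j / real k - a)" for j
  define G where "G j = cos (\<theta> + 2 * pi * real j / real k - a)" for j
  have eF: "2 * sin a * cos (\<theta> + 2 * pi * real j / real k) = F (Suc j) - F j" for j
  proof -
    have "\<theta> + 2 * pi * real (Suc j) / real k - a = (\<theta> + 2 * pi * real j / real k) + a"
      using k by (simp add: a_def field_simps)
    then show ?thesis unfolding F_def by (simp add: sin_add sin_diff)
  qed
  have eG: "2 * sin a * sin (\<theta> + 2 * pi * real j / real k) = G j - G (Suc j)" for j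
  proof -
    have "\<theta> + 2 * pi * real (Suc j) / real k - a = (\<theta> + 2 * pi * real j / real k) + a"
      using k by (simp add: a_def field_simps)
    then show ?thesis unfolding G_def by (simp add: cos_add cos_diff)
  qed
  have Fk: "F k = F 0"
  proof -
    have ee: "\<theta> + 2 * pi * real k / real k - a = (\<theta> - a) + 2 * pi" using k by simp
    show ?thesis unfolding F_def by (subst ee) (simp only: sin_periodic diff_zero of_nat_0 mult_zero_right div_0 add_0_right)
  qed
  have Gk: "G k = G 0"
  proof -
    have ee: "\<theta> + 2 * pi * real k / real k - a = (\<theta> - a) + 2 * pi" using k by simp
    show ?thesis unfolding G_def by (subst ee) (simp only: cos_periodic diff_zero of_nat_0 mult_zero_right div_0 add_0_right)
  qed
  have "2 * sin a * (\<Sum>j<k. cos (\<theta> + 2 * pi * real j / real k)) = 0"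
    unfolding sum_distrib_left eF sum_lessThan_telescope Fk by simp
  then have C: "(\<Sum>j<k. cos (\<theta> + 2 * pi * real j / real k)) = 0" using a0 by simp
  have "2 * sin a * (\<Sum>j<k. sin (\<theta> + 2 * pi * real j / real k)) = 0"
    unfolding sum_distrib_left eG sum_lessThan_telescope' Gk by simp
  then have Sn: "(\<Sum>j<k. sin (\<theta> + 2 * pi * real j / real k)) = 0" using a0 by simp
  show ?thesis
  proof (rule prod_eqI)
    show "fst (\<Sum>j<k. unitv (\<theta> + 2 * pi * real j / real k)) = fst 0"
      unfolding fst_sum using C by (simp add: unitv_def)
    show "snd (\<Sum>j<k. unitv (\<theta> + 2 * pi * real j / real k)) = snd 0"
      unfolding snd_sum using Sn by (simp add: unitv_def)
  qed
qed



lemma prod_cc: "cos s * cos (real n * s) = (cos (real (n - 1) * s) + cos (real (n + 1) * s)) / 2"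
  if "n \<ge> 1" for n :: nat
proof -
  have a: "real (n - 1) * s = real n * s - s" "real (n + 1) * s = real n * s + s"
    using that by (simp_all add: of_nat_diff algebra_simps)
  show ?thesis unfolding a by (simp add: cos_add cos_diff)
qed

lemma prod_sc: "sin s * cos (real n * s) = (sin (real (n + 1) * s) - sin (real (n - 1) * s)) / 2"
  if "n \<ge> 1" for n :: nat
proof -
  have a: "real (n - 1) * s = real n * s - s" "real (n + 1) * s = real n * s + s"
    using that by (simp_all add: of_nat_diff algebra_simps)
  show ?thesis unfolding a by (simp add: sin_add sin_diff)
qed

lemma prod_cs: "cos s * sin (real n * s) = (sin (real (n + 1) * s) + sin (real (n - 1) * s)) / 2"
  if "n \<ge> 1" for n :: nat
proof -
  have a: "real (n - 1) * s = real n * s - s" "real (n + 1) * s = real n * s + s"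
    using that by (simp_all add: of_nat_diff algebra_simps)
  show ?thesis unfolding a by (simp add: sin_add sin_diff)
qed

lemma prod_ss: "sin s * sin (real n * s) = (cos (real (n - 1) * s) - cos (real (n + 1) * s)) / 2"
  if "n \<ge> 1" for n :: nat
proof -
  have a: "real (n - 1) * s = real n * s - s" "real (n + 1) * s = real n * s + s"
    using that by (simp_all add: of_nat_diff algebra_simps)
  show ?thesis unfolding a by (simp add: cos_add cos_diff)
qed

lemma icos: "(\<lambda>s. cos (real m * s)) integrable_on {0..2*pi}" and isin: "(\<lambda>s. sin (real m * s)) integrable_on {0..2*pi}"
  by (intro integrable_continuous_interval continuous_intros)+

lemma orth:
  assumes n: "n \<ge> 2"
  shows "integral {0..2 * pi} (\<lambda>s. cos s * cos (real n * s)) = 0"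
    "integral {0..2 * pi} (\<lambda>s. sin s * cos (real n * s)) = 0"
    "integral {0..2 * pi} (\<lambda>s. cos s * sin (real n * s)) = 0"
    "integral {0..2 * pi} (\<lambda>s. sin s * sin (real n * s)) = 0"
proof -
  have n1: "n \<ge> 1" "n - 1 \<ge> 1" "n + 1 \<ge> 1" using n by auto
  show "integral {0..2 * pi} (\<lambda>s. cos s * cos (real n * s)) = 0"
    unfolding prod_cc[OF n1(1)] integral_divide integral_add[OF icos[of "n - 1"] icos[of "n + 1"]]
    using int_cos_n[of "n - 1"] int_cos_n[of "n + 1"] n1 by simp
  show "integral {0..2 * pi} (\<lambda>s. sin s * cos (real n * s)) = 0"
    unfolding prod_sc[OF n1(1)] integral_divide integral_diff[OF isin[of "n + 1"] isin[of "n - 1"]]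
    using int_sin_n[of "n + 1"] int_sin_n[of "n - 1"] n1 by simp
  show "integral {0..2 * pi} (\<lambda>s. cos s * sin (real n * s)) = 0"
    unfolding prod_cs[OF n1(1)] integral_divide integral_add[OF isin[of "n + 1"] isin[of "n - 1"]]
    using int_sin_n[of "n + 1"] int_sin_n[of "n - 1"] n1 by simp
  show "integral {0..2 * pi} (\<lambda>s. sin s * sin (real n * s)) = 0"
    unfolding prod_ss[OF n1(1)] integral_divide integral_diff[OF icos[of "n - 1"] icos[of "n + 1"]]
    using int_cos_n[of "n - 1"] int_cos_n[of "n + 1"] n1 by simp
qed

lemma shift_integral:
  fixes G :: "real \<Rightarrow> real"
  assumes cont: "continuous_on UNIV G" and per: "\<And>s. G (s + 2 * pi) = G s"
  shows "integral {0..2 * pi} (\<lambda>s. G (s + c)) = integral {0..2 * pi} G"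
  using integral_shift_real_ivl[where a=c and c=c and b="c + 2 * pi" and f=G] periodic_integral[OF cont per, of c]
  by simp

lemma coeff_vanish:
  fixes g :: "real \<Rightarrow> real"
  assumes cont: "continuous_on UNIV g" and per: "\<And>s. g (s + 2 * pi) = g s"
    and perk: "\<And>s. g (s + 2 * pi / real k) = g s" and k: "k > 0" and nd: "\<not> k dvd n"
  shows "integral {0..2 * pi} (\<lambda>s. g s * cos (real n * s)) = 0 \<and> integral {0..2 * pi} (\<lambda>s. g s * sin (real n * s)) = 0"
proof -
  define \<alpha> where "\<alpha> = 2 * pi / real k"
  define \<beta> where "\<beta> = real n * \<alpha>"
  define Ic where "Ic = integral {0..2 * pi} (\<lambda>s. g s * cos (real n * s))"
  define Is where "Is = integral {0..2 * pi} (\<lambda>s. g s * sin (real n * s))"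
  have cg: "continuous_on S g" for S using cont_f_interval[OF cont] .
  have ic: "(\<lambda>s. g s * cos (real n * s)) integrable_on {0..2*pi}" and isn: "(\<lambda>s. g s * sin (real n * s)) integrable_on {0..2*pi}"
    by (intro integrable_continuous_interval continuous_intros cg)+
  have ic': "(\<lambda>s. cos \<beta> * (g s * cos (real n * s))) integrable_on {0..2*pi}" "(\<lambda>s. sin \<beta> * (g s * sin (real n * s))) integrable_on {0..2*pi}"
    "(\<lambda>s. sin \<beta> * (g s * cos (real n * s))) integrable_on {0..2*pi}" "(\<lambda>s. cos \<beta> * (g s * sin (real n * s))) integrable_on {0..2*pi}"
    by (intro integrable_continuous_interval continuous_intros cg)+
  have "Ic = integral {0..2 * pi} (\<lambda>s. g (s + \<alpha>) * cos (real n * (s + \<alpha>)))"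
    unfolding Ic_def
    by (rule shift_integral[symmetric]) (auto intro!: continuous_intros cg simp: per cos_shift_2pi)
  also have "\<dots> = integral {0..2 * pi} (\<lambda>s. cos \<beta> * (g s * cos (real n * s)) - sin \<beta> * (g s * sin (real n * s)))"
    using perk by (intro integral_cong) (simp add: \<alpha>_def \<beta>_def distrib_left cos_add algebra_simps)
  also have "\<dots> = cos \<beta> * Ic - sin \<beta> * Is"
    unfolding integral_diff[OF ic'(1,2)] Ic_def Is_def by simp
  finally have E1: "Ic = cos \<beta> * Ic - sin \<beta> * Is" .
  have "Is = integral {0..2 * pi} (\<lambda>s. g (s + \<alpha>) * sin (real n * (s + \<alpha>)))"
    unfolding Is_def
    by (rule shift_integral[symmetric]) (auto intro!: continuous_intros cg simp: per sin_shift_2pi)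
  also have "\<dots> = integral {0..2 * pi} (\<lambda>s. sin \<beta> * (g s * cos (real n * s)) + cos \<beta> * (g s * sin (real n * s)))"
    using perk by (intro integral_cong) (simp add: \<alpha>_def \<beta>_def distrib_left sin_add algebra_simps)
  also have "\<dots> = sin \<beta> * Ic + cos \<beta> * Is"
    unfolding integral_add[OF ic'(3,4)] Ic_def Is_def by simp
  finally have E2: "Is = sin \<beta> * Ic + cos \<beta> * Is" .
  have cb: "cos \<beta> \<noteq> 1"
  proof
    assume "cos \<beta> = 1"
    then obtain m :: int where m: "\<beta> = real_of_int m * 2 * pi" using cos_one_2pi_int by blast
    then have "real n * (2 * pi / real k) = real_of_int m * 2 * pi" by (simp add: \<beta>_def \<alpha>_def)
    then have "real n = real_of_int m * real k" using k pi_gt_zero by (simp add: field_simps)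
    then have "int n = m * int k" by (metis of_int_eq_iff of_int_mult of_int_of_nat_eq)
    then have "int k dvd int n" by simp
    then show False using nd by simp
  qed
  have sc: "sin \<beta> ^ 2 + cos \<beta> ^ 2 = 1" by simp
  have D: "(2 - 2 * cos \<beta>) \<noteq> 0" using cb by simp
  have "(2 - 2 * cos \<beta>) * Ic = (1 - cos \<beta>) * ((1 - cos \<beta>) * Ic + sin \<beta> * Is) - sin \<beta> * (- sin \<beta> * Ic + (1 - cos \<beta>) * Is)"
    using sc by algebra
  also have "\<dots> = 0" using E1 E2 by (simp add: algebra_simps)
  finally have "Ic = 0" using D by simp
  have "(2 - 2 * cos \<beta>) * Is = sin \<beta> * ((1 - cos \<beta>) * Ic + sin \<beta> * Is) + (1 - cos \<beta>) * (- sin \<beta> * Ic + (1 - cos \<beta>) * Is)"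
    using sc by algebra
  also have "\<dots> = 0" using E1 E2 by (simp add: algebra_simps)
  finally have "Is = 0" using D by simp
  show ?thesis using \<open>Ic = 0\<close> \<open>Is = 0\<close> by (simp add: Ic_def Is_def)
qed



lemma steiner_eq:
  fixes h :: "real \<Rightarrow> real"
  assumes cont: "continuous_on UNIV h"
  shows "steiner_point h = (fourier_a h 1, fourier_b h 1)"
proof -
  have ch: "continuous_on S h" for S using cont_f_interval[OF cont] .
  have int: "(\<lambda>s. h s *\<^sub>R unitv s) integrable_on {0..2 * pi}"
    unfolding unitv_def by (intro integrable_continuous_interval continuous_intros ch)
  obtain X1 X2 where X: "integral {0..2 * pi} (\<lambda>s. h s *\<^sub>R unitv s) = (X1, X2)" by (cases "integral {0..2 * pi} (\<lambda>s. h s *\<^sub>R unitv s)")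
  have "X1 = integral {0..2 * pi} (\<lambda>s. h s * cos s)"
    using integral_component_eq[OF int, of "(1, 0)"] X by (simp add: unitv_def)
  moreover have "X2 = integral {0..2 * pi} (\<lambda>s. h s * sin s)"
    using integral_component_eq[OF int, of "(0, 1)"] X by (simp add: unitv_def)
  ultimately show ?thesis
    unfolding steiner_point_def X fourier_a_def fourier_b_def by simp
qed

lemma center_regular:
  assumes k: "k \<ge> (2::nat)"
  shows "center_of_mass k (\<lambda>j. c + r *\<^sub>R unitv (\<theta> + 2 * pi * real j / real k)) = c"
proof -
  have "(\<Sum>j<k. c + r *\<^sub>R unitv (\<theta> + 2 * pi * real j / real k)) = real k *\<^sub>R c + r *\<^sub>R (\<Sum>j<k. unitv (\<theta> + 2 * pi * real j / real k))"
    by (simp add: sum.distrib scaleR_sum_right sum_constant_scaleR)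
  also have "\<dots> = real k *\<^sub>R c" using sum_unitv_zero[OF k] by simp
  finally show ?thesis using k by (simp add: center_of_mass_def)
qed

lemma center_cong:
  assumes "\<And>j. j < k \<Longrightarrow> v j = w j"
  shows "center_of_mass k v = center_of_mass k w"
proof -
  have "sum v {..<k} = sum w {..<k}" by (rule sum.cong) (auto simp: assms)
  then show ?thesis unfolding center_of_mass_def by simp
qed

lemma cos_dvd_shift:
  assumes k: "k > (0::nat)" and d: "k dvd n"
  shows "cos (real n * (s + 2 * pi / real k)) = cos (real n * s)"
    "sin (real n * (s + 2 * pi / real k)) = sin (real n * s)"
proof -
  obtain m where n: "n = k * m" using d by blast
  have "real n * (s + 2 * pi / real k) = real n * s + 2 * real m * pi"
    using k by (simp add: n field_simps)
  then show "cos (real n * (s + 2 * pi / real k)) = cos (real n * s)"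
    "sin (real n * (s + 2 * pi / real k)) = sin (real n * s)"
    by (simp_all add: cos_add sin_add)
qed



theorem proposition4p1:
  fixes h :: "real \<Rightarrow> real" and k :: nat
  assumes "hedgehog_support h" and "k > 2"
  shows "(\<forall>s. regular_polygon k (eq_vertex h k s)
               \<and> center_of_mass k (eq_vertex h k s) = steiner_point h)
         \<longleftrightarrow>
         (\<forall>s. h s = fourier_a0 h + fourier_a h 1 * cos s + fourier_b h 1 * sin s
                + (\<Sum>n. if k dvd n \<and> n > 1
                        then fourier_a h n * cos (real n * s) + fourier_b h n * sin (real n * s)
                        else 0))"
  (is "?L \<longleftrightarrow> ?R")
proof -
  have k: "k > 2" using assms(2) .
  have k0: "k > 0" and k2: "k \<ge> 2" using k by auto
  have diff: "h differentiable (at x)" for x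
  proof -
    have "(deriv ^^ 0) h differentiable (at x)"
      using assms(1) unfolding hedgehog_support_def smooth_fun_def by blast
    then show ?thesis by simp
  qed
  have cont: "continuous_on UNIV h"
    by (intro continuous_at_imp_continuous_on ballI differentiable_imp_continuous_within diff)
  have ch: "continuous_on S h" for S using cont_f_interval[OF cont] .
  have per: "h (s + 2 * pi) = h s" for s
    using assms(1) unfolding hedgehog_support_def by blast
  have der: "\<exists>D. (h has_real_derivative D) (at x)" for x
    using diff[of x] DERIV_deriv_iff_real_differentiable by blast
  define a1 where "a1 = fourier_a h 1"
  define b1 where "b1 = fourier_b h 1"
  define c where "c = (a1, b1)"
  define g where "g s = h s - a1 * cos s - b1 * sin s" for s
  have cu: "c \<bullet> unitv t = a1 * cos t + b1 * sin t" for t by (simp add: c_def inner_unitv)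
  have st: "steiner_point h = c" unfolding c_def a1_def b1_def by (rule steiner_eq[OF cont])
  have gcont: "continuous_on UNIV g" unfolding g_def by (intro continuous_intros cont)
  have gper: "g (s + 2 * pi) = g s" for s unfolding g_def using per by simp
  have hg: "h t = c \<bullet> unitv t + g t" for t unfolding g_def cu by simp

  have A: "\<forall>s. g (s + 2 * pi / real k) = g s" if L: ?L
  proof
    fix s
    from L[rule_format, of s] obtain c' r \<theta> where
      V: "\<And>j. j < k \<Longrightarrow> eq_vertex h k s j = c' + r *\<^sub>R unitv (\<theta> + 2 * pi * real j / real k)" and
      C: "center_of_mass k (eq_vertex h k s) = steiner_point h"
      unfolding regular_polygon_def by blast
    have "center_of_mass k (eq_vertex h k s) = c'"
      using center_cong[of k "eq_vertex h k s", OF V] center_regular[OF k2] by simp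
    then have cc: "c' = c" using C st by simp
    have v0: "eq_vertex h k s 0 = c + r *\<^sub>R unitv \<theta>" using V[of 0] k cc by simp
    have v1: "eq_vertex h k s 1 = c + r *\<^sub>R unitv (\<theta> + 2 * pi / real k)" using V[of 1] k cc by simp
    have e0: "(c + r *\<^sub>R unitv \<theta>) \<bullet> unitv s = h s"
      using eq_vertex_char[OF k, where h=h and s=s and j=0 and y="c + r *\<^sub>R unitv \<theta>"] v0 by simp
    have e1: "(c + r *\<^sub>R unitv (\<theta> + 2 * pi / real k)) \<bullet> unitv (s + 2 * pi / real k) = h (s + 2 * pi / real k)"
      using eq_vertex_char[OF k, where h=h and s=s and j=1 and y="c + r *\<^sub>R unitv (\<theta> + 2 * pi / real k)"] v1 by simp
    have "g s = r * cos (\<theta> - s)"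
      using hg[of s] e0 by (simp add: inner_add_left unitv_inner_unitv)
    moreover have "g (s + 2 * pi / real k) = r * cos (\<theta> - s)"
      using hg[of "s + 2 * pi / real k"] e1 by (simp add: inner_add_left unitv_inner_unitv)
    ultimately show "g (s + 2 * pi / real k) = g s" by simp
  qed

  have B: ?R if P: "\<forall>s. g (s + 2 * pi / real k) = g s"
  proof
    fix x
    have van: "fourier_a h n = 0 \<and> fourier_b h n = 0" if n2: "n \<ge> 2" and nd: "\<not> k dvd n" for n
    proof -
      have gv: "integral {0..2 * pi} (\<lambda>s. g s * cos (real n * s)) = 0 \<and> integral {0..2 * pi} (\<lambda>s. g s * sin (real n * s)) = 0"
        by (rule coeff_vanish[OF gcont gper _ k0 nd]) (use P in blast)
      have cg: "continuous_on S g" for S using cont_f_interval[OF gcont] .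
      have i1: "(\<lambda>s. g s * cos (real n * s)) integrable_on {0..2*pi}" "(\<lambda>s. a1 * (cos s * cos (real n * s))) integrable_on {0..2*pi}"
        "(\<lambda>s. b1 * (sin s * cos (real n * s))) integrable_on {0..2*pi}"
        "(\<lambda>s. g s * cos (real n * s) + a1 * (cos s * cos (real n * s))) integrable_on {0..2*pi}"
        by (intro integrable_continuous_interval continuous_intros cg)+
      have i2: "(\<lambda>s. g s * sin (real n * s)) integrable_on {0..2*pi}" "(\<lambda>s. a1 * (cos s * sin (real n * s))) integrable_on {0..2*pi}"
        "(\<lambda>s. b1 * (sin s * sin (real n * s))) integrable_on {0..2*pi}"
        "(\<lambda>s. g s * sin (real n * s) + a1 * (cos s * sin (real n * s))) integrable_on {0..2*pi}"
        by (intro integrable_continuous_interval continuous_intros cg)+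
      have "integral {0..2 * pi} (\<lambda>s. h s * cos (real n * s)) = integral {0..2 * pi} (\<lambda>s. g s * cos (real n * s) + a1 * (cos s * cos (real n * s)) + b1 * (sin s * cos (real n * s)))"
        by (intro integral_cong) (simp add: g_def algebra_simps)
      also have "\<dots> = 0"
        unfolding integral_add[OF i1(4) i1(3)] integral_add[OF i1(1) i1(2)]
        using gv orth[OF n2] by simp
      finally have 1: "integral {0..2 * pi} (\<lambda>s. h s * cos (real n * s)) = 0" .
      have "integral {0..2 * pi} (\<lambda>s. h s * sin (real n * s)) = integral {0..2 * pi} (\<lambda>s. g s * sin (real n * s) + a1 * (cos s * sin (real n * s)) + b1 * (sin s * sin (real n * s)))"
        by (intro integral_cong) (simp add: g_def algebra_simps)
      also have "\<dots> = 0"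
        unfolding integral_add[OF i2(4) i2(3)] integral_add[OF i2(1) i2(2)]
        using gv orth[OF n2] by simp
      finally have 2: "integral {0..2 * pi} (\<lambda>s. h s * sin (real n * s)) = 0" .
      show ?thesis using 1 2 by (simp add: fourier_a_def fourier_b_def)
    qed
    define T where "T n = fourier_a h n * cos (real n * x) + fourier_b h n * sin (real n * x)" for n
    define E where "E n = (if k dvd n \<and> n > 1 then fourier_a h n * cos (real n * x) + fourier_b h n * sin (real n * x) else 0)" for n
    have nk1: "\<not> k dvd 1" using k by auto
    have tele: "(\<Sum>n<N + 2. E n) = (\<Sum>n\<in>{1..Suc N}. T n) - T 1" for N
    proof (induction N)
      case 0
      have "{..<2::nat} = {0, 1}" by auto
      then show ?case using nk1 by (simp add: E_def)
    next
      case (Suc N)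
      have "E (N + 2) = T (N + 2)"
      proof (cases "k dvd (N + 2)")
        case True then show ?thesis by (simp add: E_def T_def)
      next
        case False then show ?thesis using van[of "N + 2"] by (simp add: E_def T_def)
      qed
      then show ?case using Suc by (simp add: T_def)
    qed
    obtain D where D: "(h has_real_derivative D) (at x)" using der by blast
    have conv: "(\<lambda>N. \<Sum>n\<in>{1..N}. T n) \<longlonglongrightarrow> h x - fourier_a0 h"
      unfolding T_def by (rule fourier_conv[OF cont per D])
    have "(\<lambda>N. (\<Sum>n\<in>{1..Suc N}. T n) - T 1) \<longlonglongrightarrow> h x - fourier_a0 h - T 1"
      by (intro tendsto_diff tendsto_const LIMSEQ_Suc[OF conv])
    then have "(\<lambda>N. \<Sum>n<N + 2. E n) \<longlonglongrightarrow> h x - fourier_a0 h - T 1"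
      unfolding tele .
    then have "(\<lambda>N. \<Sum>n<N. E n) \<longlonglongrightarrow> h x - fourier_a0 h - T 1"
      by (rule LIMSEQ_offset)
    then have "E sums (h x - fourier_a0 h - T 1)" by (simp add: sums_def)
    then have "suminf E = h x - fourier_a0 h - T 1" by (rule sums_unique[symmetric])
    then show "h x = fourier_a0 h + fourier_a h 1 * cos x + fourier_b h 1 * sin x
                + (\<Sum>n. if k dvd n \<and> n > 1
                        then fourier_a h n * cos (real n * x) + fourier_b h n * sin (real n * x)
                        else 0)"
      unfolding E_def T_def by simp
  qed

  have C: "\<forall>s. g (s + 2 * pi / real k) = g s" if R: ?R
  proof
    fix s
    define E where "E t = (\<lambda>n. if k dvd n \<and> n > 1 then fourier_a h n * cos (real n * t) + fourier_b h n * sin (real n * t) else 0)" for t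
    have gE: "g t = fourier_a0 h + suminf (E t)" for t
      using R[rule_format, of t] unfolding g_def E_def a1_def b1_def by simp
    have "E (s + 2 * pi / real k) = E s"
      unfolding E_def by (rule ext) (simp add: cos_dvd_shift[OF k0])
    then show "g (s + 2 * pi / real k) = g s" using gE by simp
  qed

  have D: ?L if P: "\<forall>s. g (s + 2 * pi / real k) = g s"
  proof
    fix s
    have gj: "g (s + 2 * pi * real j / real k) = g s" for j
    proof (induction j)
      case 0 then show ?case by simp
    next
      case (Suc j)
      have "s + 2 * pi * real (Suc j) / real k = (s + 2 * pi * real j / real k) + 2 * pi / real k"
        using k0 by (simp add: field_simps)
      then show ?case using P[rule_format, of "s + 2 * pi * real j / real k"] Suc by (simp add: add.assoc)
    qed
    have cpk: "cos (pi / real k) > 0"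
    proof (rule cos_gt_zero_pi)
      show "- (pi / 2) < pi / real k" using k0 pi_gt_zero
        by (smt (verit) divide_pos_pos of_nat_0_less_iff)
      show "pi / real k < pi / 2" using k pi_gt_zero by (simp add: field_simps)
    qed
    define r where "r = g s / cos (pi / real k)"
    define \<theta> where "\<theta> = s + pi / real k"
    have V: "eq_vertex h k s j = c + r *\<^sub>R unitv (\<theta> + 2 * pi * real j / real k)" for j
    proof (subst eq_vertex_char[OF k], rule conjI)
      have "\<theta> + 2 * pi * real j / real k - (s + 2 * pi * real j / real k) = pi / real k"
        by (simp add: \<theta>_def)
      then show "(c + r *\<^sub>R unitv (\<theta> + 2 * pi * real j / real k)) \<bullet> unitv (s + 2 * pi * real j / real k) = h (s + 2 * pi * real j / real k)"
        using hg[of "s + 2 * pi * real j / real k"] gj[of j] cpk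
        by (simp add: inner_add_left unitv_inner_unitv r_def)
      have "\<theta> + 2 * pi * real j / real k - (s + 2 * pi * (real j + 1) / real k) = - (pi / real k)"
        using k0 by (simp add: \<theta>_def field_simps)
      moreover have "g (s + 2 * pi * (real j + 1) / real k) = g s"
        using gj[of "Suc j"] by (simp add: add.commute)
      ultimately show "(c + r *\<^sub>R unitv (\<theta> + 2 * pi * real j / real k)) \<bullet> unitv (s + 2 * pi * (real j + 1) / real k) = h (s + 2 * pi * (real j + 1) / real k)"
        using hg[of "s + 2 * pi * (real j + 1) / real k"] cpk
        by (simp add: inner_add_left unitv_inner_unitv r_def)
    qed
    have "regular_polygon k (eq_vertex h k s)"
      unfolding regular_polygon_def using V by blast
    moreover have "eq_vertex h k s = (\<lambda>j. c + r *\<^sub>R unitv (\<theta> + 2 * pi * real j / real k))"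
      by (rule ext, rule V)
    then have "center_of_mass k (eq_vertex h k s) = steiner_point h"
      using center_regular[OF k2] st by simp
    ultimately show "regular_polygon k (eq_vertex h k s) \<and> center_of_mass k (eq_vertex h k s) = steiner_point h" ..
  qed

  show ?thesis using A B C D by blast
qed

end
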